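(* Let $n=2$ and let $\mathcal M_1=\begin{pmatrix}\frac12&\frac12\\ \frac12&\frac12\end{pmatrix}$ and $\mathcal M_2=\begin{pmatrix}\frac{9}{10}&\frac{1}{10}\\ \frac1{10}&\frac9{10}\end{pmatrix}$. Then (i) there is a directed $3$-regular multigraph on $[2]$ whose throughput with respect to $\mathcal M_1$ is at least $\frac89$, but no directed $3$-regular multigraph on $[2]$ has weak direct throughput with respect to $\mathcal M_1$ greater than $\frac56$; and (ii) there is a directed $3$-regular multigraph on $[2]$ whose weak direct throughput with respect to $\mathcal M_2$ is at least $\frac9{10}$, but no directed $3$-regular multigraph on $[2]$ has throughput with respect to $\mathcal M_2$ at least $\frac9{10}$.
   Context: Let $n\ge 1$ and $[n]=\{1,\dots,n\}$. Networks are finite directed multigraphs on vertex set $[n]$; self-loops and parallel arcs are allowed. A directed multigraph is directed $r$-regular if every vertex has exactly $r$ outgoing and exactly $r$ incoming arcs (a self-loop at $v$ counts as one outgoing and one incoming arc of $v$). A path is a non-empty sequence of arcs $((u_1,v_1),\dots,(u_\ell,v_\ell))$ with $v_i=u_{i+1}$ for $i<\ell$; it goes from $u_1$ to $v_\ell$ and has length $\ell\ge 1$. An $n\times n$ matrix is doubly stochastic if all entries are nonnegative and every row and every column sums to $1$. In a directed $(2n-1)$-regular multigraph $G$ on $[n]$ every arc has capacity $\frac{1}{2n-1}$. $G$ hosts a nonnegative $n\times n$ matrix $\mathcal M=(a_{i,j})$ if there is a finite collection $\{(P_k,d_k)\}$, where each $P_k$ is a path in $G$ from some $s_k$ to some $t_k$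 and $d_k\ge 0$, such that $\sum_{k:\,s_k=u,\,t_k=v} d_k=a_{u,v}$ for all $u,v\in[n]$, and for every arc $e$ of $G$ (parallel arcs are distinct) $\sum_{k:\,e\in P_k} d_k\le \frac{1}{2n-1}$. $G$ directly hosts $\mathcal M$ if this is possible with all paths $P_k$ of length $1$. For doubly stochastic $\mathcal M=(a_{i,j})$: the throughput of $G$ is the largest $\theta$ such that $G$ hosts $\theta\mathcal M$; the weak direct throughput of $G$ is the largest $\eta$ such that $G$ directly hosts some matrix $\mathcal M'=(a'_{i,j})$ with $0\le a'_{i,j}\le a_{i,j}$ for all $i,j$ and $\sum_{i,j}a'_{i,j}=\eta n$. *)

theory Defs
  imports Main "HOL-Library.Multiset" Complex_Main
begin

text \<open>A finite directed multigraph: arcs are identified by natural numbers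
 (so parallel arcs are distinct objects), each arc has a source and a target.\<close>
record mgraph =
  arcs :: "nat set"
  src  :: "nat \<Rightarrow> nat"
  tgt  :: "nat \<Rightarrow> nat"

definition regular_mgraph :: "nat \<Rightarrow> nat \<Rightarrow> mgraph \<Rightarrow> bool" where
  "regular_mgraph n r G \<longleftrightarrow>
     finite (arcs G) \<and>
     (\<forall>e\<in>arcs G. src G e \<in> {1..n} \<and> tgt G e \<in> {1..n}) \<and>
     (\<forall>v\<in>{1..n}. card {e\<in>arcs G. src G e = v} = r \<and> card {e\<in>arcs G. tgt G e = v} = r)"

definition is_path :: "mgraph \<Rightarrow> nat list \<Rightarrow> bool" where
  "is_path G P \<longleftrightarrow> P \<noteq> [] \<and> set P \<subseteq> arcs G \<and>
     (\<forall>i. Suc i < length P \<longrightarrow> tgt G (P ! i) = src G (P ! Suc i))"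

definition path_start :: "mgraph \<Rightarrow> nat list \<Rightarrow> nat" where
  "path_start G P = src G (hd P)"

definition path_end :: "mgraph \<Rightarrow> nat list \<Rightarrow> nat" where
  "path_end G P = tgt G (last P)"

definition hosts_gen :: "bool \<Rightarrow> nat \<Rightarrow> mgraph \<Rightarrow> (nat \<Rightarrow> nat \<Rightarrow> real) \<Rightarrow> bool" where
  "hosts_gen direct n G a \<longleftrightarrow>
     (\<exists>F :: (nat list \<times> real) list.
        (\<forall>(P, d) \<in> set F. is_path G P \<and> d \<ge> 0 \<and> (direct \<longrightarrow> length P = 1)) \<and>
        (\<forall>u\<in>{1..n}. \<forall>v\<in>{1..n}.
            sum_list (map (\<lambda>(P, d). if path_start G P = u \<and> path_end G P = v then d else 0) F)
              = a u v) \<and>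
        (\<forall>e\<in>arcs G.
            sum_list (map (\<lambda>(P, d). if e \<in> set P then d else 0) F)
              \<le> 1 / (2 * real n - 1)))"

definition hosts :: "nat \<Rightarrow> mgraph \<Rightarrow> (nat \<Rightarrow> nat \<Rightarrow> real) \<Rightarrow> bool" where
  "hosts n G a = hosts_gen False n G a"

definition directly_hosts :: "nat \<Rightarrow> mgraph \<Rightarrow> (nat \<Rightarrow> nat \<Rightarrow> real) \<Rightarrow> bool" where
  "directly_hosts n G a = hosts_gen True n G a"

definition throughput :: "nat \<Rightarrow> mgraph \<Rightarrow> (nat \<Rightarrow> nat \<Rightarrow> real) \<Rightarrow> real" where
  "throughput n G M = Sup {\<theta>. hosts n G (\<lambda>i j. \<theta> * M i j)}"

definition weak_direct_throughput :: "nat \<Rightarrow> mgraph \<Rightarrow> (nat \<Rightarrow> nat \<Rightarrow> real) \<Rightarrow> real" where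
  "weak_direct_throughput n G M = Sup {\<eta>. \<exists>M'.
      (\<forall>i\<in>{1..n}. \<forall>j\<in>{1..n}. 0 \<le> M' i j \<and> M' i j \<le> M i j) \<and>
      (\<Sum>i\<in>{1..n}. \<Sum>j\<in>{1..n}. M' i j) = \<eta> * real n \<and>
      directly_hosts n G M'}"

definition M1 :: "nat \<Rightarrow> nat \<Rightarrow> real" where
  "M1 i j = 1/2"

definition M2 :: "nat \<Rightarrow> nat \<Rightarrow> real" where
  "M2 i j = (if i = j then 9/10 else 1/10)"

end

theory Submission
  imports Defs
begin

lemma key:
  fixes c :: "nat \<Rightarrow> nat \<Rightarrow> real" and w :: "nat \<Rightarrow> real"
  assumes "finite V" and fin: "finite (arcs G)"
  and "\<forall>(P,d)\<in>set F. d \<ge> 0 \<and> set P \<subseteq> arcs G \<and> path_start G P \<in> V \<and> path_end G P \<in> V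
         \<and> c (path_start G P) (path_end G P) \<le> (\<Sum>e\<in>set P. w e)"
  shows "(\<Sum>u\<in>V. \<Sum>v\<in>V. sum_list (map (\<lambda>(P, d). if path_start G P = u \<and> path_end G P = v then d else 0) F) * c u v)
     \<le> (\<Sum>e\<in>arcs G. w e * sum_list (map (\<lambda>(P, d). if e \<in> set P then d else 0) F))"
  using assms(3)
proof (induction F)
  case Nil
  then show ?case by simp
next
  case (Cons x F)
  obtain P d where x: "x = (P,d)" by fastforce
  have h: "d \<ge> 0" "set P \<subseteq> arcs G" "path_start G P \<in> V" "path_end G P \<in> V"
     "c (path_start G P) (path_end G P) \<le> (\<Sum>e\<in>set P. w e)" using Cons.prems x by auto
  have IH: "(\<Sum>u\<in>V. \<Sum>v\<in>V. sum_list (map (\<lambda>(P, d). if path_start G P = u \<and> path_end G P = v then d else 0) F) * c u v)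
     \<le> (\<Sum>e\<in>arcs G. w e * sum_list (map (\<lambda>(P, d). if e \<in> set P then d else 0) F))"
    using Cons by auto
  have L: "(\<Sum>u\<in>V. \<Sum>v\<in>V. (if path_start G P = u \<and> path_end G P = v then d else 0) * c u v)
      = d * c (path_start G P) (path_end G P)"
  proof -
    have "(\<Sum>u\<in>V. \<Sum>v\<in>V. (if path_start G P = u \<and> path_end G P = v then d else 0) * c u v)
       = (\<Sum>u\<in>V. if path_start G P = u then d * c u (path_end G P) else 0)"
      using h assms(1) by (intro sum.cong refl) (auto simp: if_distrib if_distribR sum.delta' cong: if_cong)
    also have "\<dots> = d * c (path_start G P) (path_end G P)" using h assms(1) by (simp add: sum.delta)
    finally show ?thesis .
  qed
  have R: "(\<Sum>e\<in>arcs G. w e * (if e \<in> set P then d else 0)) = d * (\<Sum>e\<in>set P. w e)"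
  proof -
    have "(\<Sum>e\<in>arcs G. w e * (if e \<in> set P then d else 0)) = (\<Sum>e\<in>arcs G. if e \<in> set P then d * w e else 0)"
      by (intro sum.cong) auto
    also have "\<dots> = (\<Sum>e\<in>arcs G \<inter> set P. d * w e)" using fin by (simp add: sum.inter_restrict)
    also have "arcs G \<inter> set P = set P" using h by auto
    finally show ?thesis by (simp add: sum_distrib_left)
  qed
  have "d * c (path_start G P) (path_end G P) \<le> d * (\<Sum>e\<in>set P. w e)"
    using h by (simp add: mult_left_mono)
  then show ?case using IH L R
    by (simp add: x distrib_right distrib_left sum.distrib)
qed

lemma host_bound:
  fixes c :: "nat \<Rightarrow> nat \<Rightarrow> real" and w :: "nat \<Rightarrow> real"
  assumes H: "hosts_gen dir n G a" and R: "regular_mgraph n r G" and W: "\<forall>e\<in>arcs G. w e \<ge> 0"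
  and C: "\<And>P. is_path G P \<Longrightarrow> (dir \<longrightarrow> length P = 1) \<Longrightarrow> c (path_start G P) (path_end G P) \<le> (\<Sum>e\<in>set P. w e)"
  shows "(\<Sum>u\<in>{1..n}. \<Sum>v\<in>{1..n}. a u v * c u v) \<le> (\<Sum>e\<in>arcs G. w e) / (2 * real n - 1)"
proof -
  obtain F :: "(nat list \<times> real) list" where
    F1: "\<forall>(P, d) \<in> set F. is_path G P \<and> d \<ge> 0 \<and> (dir \<longrightarrow> length P = 1)" and
    F2: "\<forall>u\<in>{1..n}. \<forall>v\<in>{1..n}.
            sum_list (map (\<lambda>(P, d). if path_start G P = u \<and> path_end G P = v then d else 0) F) = a u v" and
    F3: "\<forall>e\<in>arcs G. sum_list (map (\<lambda>(P, d). if e \<in> set P then d else 0) F) \<le> 1 / (2 * real n - 1)"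
    using H unfolding hosts_gen_def by blast
  have fin: "finite (arcs G)" and B: "\<forall>e\<in>arcs G. src G e \<in> {1..n} \<and> tgt G e \<in> {1..n}"
    using R unfolding regular_mgraph_def by auto
  have "\<forall>(P,d)\<in>set F. d \<ge> 0 \<and> set P \<subseteq> arcs G \<and> path_start G P \<in> {1..n} \<and> path_end G P \<in> {1..n}
         \<and> c (path_start G P) (path_end G P) \<le> (\<Sum>e\<in>set P. w e)"
  proof (intro ballI, clarify)
    fix P d assume "(P, d) \<in> set F"
    then have p: "is_path G P" "d \<ge> 0" "dir \<longrightarrow> length P = 1" using F1 by auto
    then have "P \<noteq> []" "set P \<subseteq> arcs G" unfolding is_path_def by auto
    then have "hd P \<in> arcs G" "last P \<in> arcs G" by auto
    then show "0 \<le> d \<and> set P \<subseteq> arcs G \<and> path_start G P \<in> {1..n} \<and> path_end G P \<in> {1..n}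
         \<and> c (path_start G P) (path_end G P) \<le> (\<Sum>e\<in>set P. w e)"
      using p C B \<open>set P \<subseteq> arcs G\<close> unfolding path_start_def path_end_def by blast
  qed
  from key[OF _ fin this]
  have "(\<Sum>u\<in>{1..n}. \<Sum>v\<in>{1..n}. a u v * c u v) \<le> (\<Sum>e\<in>arcs G. w e * sum_list (map (\<lambda>(P, d). if e \<in> set P then d else 0) F))"
    using F2 by simp
  also have "\<dots> \<le> (\<Sum>e\<in>arcs G. w e * (1 / (2 * real n - 1)))"
    using F3 W by (intro sum_mono mult_left_mono) auto
  also have "\<dots> = (\<Sum>e\<in>arcs G. w e) / (2 * real n - 1)"
    by (simp add: sum_divide_distrib)
  finally show ?thesis .
qed

definition Aset :: "mgraph \<Rightarrow> nat \<Rightarrow> nat \<Rightarrow> nat set" where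
  "Aset G u v = {e\<in>arcs G. src G e = u \<and> tgt G e = v}"

lemma reg2:
  assumes "regular_mgraph 2 r G"
  shows "finite (arcs G)" "\<forall>e\<in>arcs G. src G e \<in> {1,2} \<and> tgt G e \<in> {1,2}"
    "card (Aset G 1 1) + card (Aset G 1 2) = r" "card (Aset G 2 1) + card (Aset G 2 2) = r"
    "card (Aset G 1 1) + card (Aset G 2 1) = r" "card (Aset G 1 2) + card (Aset G 2 2) = r"
    "sum f (arcs G) = sum f (Aset G 1 1) + sum f (Aset G 1 2) + sum f (Aset G 2 1) + sum f (Aset G 2 2)"
proof -
  have fin: "finite (arcs G)" and B: "\<forall>e\<in>arcs G. src G e \<in> {1,2} \<and> tgt G e \<in> {1,2}"
    and D: "\<forall>v\<in>{1..2}. card {e\<in>arcs G. src G e = v} = r \<and> card {e\<in>arcs G. tgt G e = v} = r"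
    using assms unfolding regular_mgraph_def by (auto simp: atLeastAtMost_iff)
  have fa: "finite (Aset G u v)" for u v using fin unfolding Aset_def by auto
  show "finite (arcs G)" "\<forall>e\<in>arcs G. src G e \<in> {1,2} \<and> tgt G e \<in> {1,2}" using fin B by auto
  have s1: "{e\<in>arcs G. src G e = u} = Aset G u 1 \<union> Aset G u 2" for u
    using B unfolding Aset_def by auto
  have t1: "{e\<in>arcs G. tgt G e = v} = Aset G 1 v \<union> Aset G 2 v" for v
    using B unfolding Aset_def by auto
  have dj: "Aset G u v \<inter> Aset G u' v' = {}" if "u \<noteq> u' \<or> v \<noteq> v'" for u v u' v'
    using that unfolding Aset_def by auto
  have cs: "card (Aset G u 1) + card (Aset G u 2) = r" if "u \<in> {1..2}" for u
    proof -
    have "card {e\<in>arcs G. src G e = u} = r" using D that by blast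
    then show ?thesis using s1[of u] fa[of u 1] fa[of u 2] dj[where u=u and v=1 and u'=u and v'=2]
      by (simp add: card_Un_disjoint)
  qed
  have ct: "card (Aset G 1 v) + card (Aset G 2 v) = r" if "v \<in> {1..2}" for v
    proof -
    have "card {e\<in>arcs G. tgt G e = v} = r" using D that by blast
    then show ?thesis using t1[of v] fa[of 1 v] fa[of 2 v] dj[where u=1 and v=v and u'=2 and v'=v]
      by (simp add: card_Un_disjoint)
  qed
  show "card (Aset G 1 1) + card (Aset G 1 2) = r" "card (Aset G 2 1) + card (Aset G 2 2) = r"
    "card (Aset G 1 1) + card (Aset G 2 1) = r" "card (Aset G 1 2) + card (Aset G 2 2) = r"
    using cs[of 1] cs[of 2] ct[of 1] ct[of 2] by auto
  have U: "arcs G = ((Aset G 1 1 \<union> Aset G 1 2) \<union> Aset G 2 1) \<union> Aset G 2 2"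
    using B unfolding Aset_def by auto
  show "sum f (arcs G) = sum f (Aset G 1 1) + sum f (Aset G 1 2) + sum f (Aset G 2 1) + sum f (Aset G 2 2)"
  proof -
    have fU: "finite (Aset G 1 1 \<union> Aset G 1 2)" "finite (Aset G 1 1 \<union> Aset G 1 2 \<union> Aset G 2 1)" using fa by auto
    have "sum f (arcs G) = sum f (Aset G 1 1 \<union> Aset G 1 2 \<union> Aset G 2 1) + sum f (Aset G 2 2)"
      unfolding U by (rule sum.union_disjoint[OF fU(2) fa]) (auto simp: Aset_def)
    also have "sum f (Aset G 1 1 \<union> Aset G 1 2 \<union> Aset G 2 1) = sum f (Aset G 1 1 \<union> Aset G 1 2) + sum f (Aset G 2 1)"
      by (rule sum.union_disjoint[OF fU(1) fa]) (auto simp: Aset_def)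
    also have "sum f (Aset G 1 1 \<union> Aset G 1 2) = sum f (Aset G 1 1) + sum f (Aset G 1 2)"
      by (rule sum.union_disjoint[OF fa fa]) (auto simp: Aset_def)
    finally show ?thesis .
  qed
qed


lemma is_path_Cons2: "is_path G (x#y#xs) \<longleftrightarrow> x \<in> arcs G \<and> tgt G x = src G y \<and> is_path G (y#xs)"
proof
  assume h: "is_path G (x#y#xs)"
  then have "tgt G ((x#y#xs) ! 0) = src G ((x#y#xs) ! Suc 0)" unfolding is_path_def by (metis length_Cons zero_less_Suc Suc_less_eq)
  moreover have "\<forall>i. Suc i < length (y#xs) \<longrightarrow> tgt G ((y#xs) ! i) = src G ((y#xs) ! Suc i)"
  proof (intro allI impI)
    fix i assume "Suc i < length (y#xs)"
    then have "Suc (Suc i) < length (x#y#xs)" by simp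
    then show "tgt G ((y#xs) ! i) = src G ((y#xs) ! Suc i)" using h unfolding is_path_def by fastforce
  qed
  ultimately show "x \<in> arcs G \<and> tgt G x = src G y \<and> is_path G (y#xs)" using h unfolding is_path_def by auto
next
  assume h: "x \<in> arcs G \<and> tgt G x = src G y \<and> is_path G (y#xs)"
  show "is_path G (x#y#xs)" unfolding is_path_def
  proof (intro conjI allI impI)
    fix i assume i: "Suc i < length (x#y#xs)"
    show "tgt G ((x#y#xs) ! i) = src G ((x#y#xs) ! Suc i)"
    proof (cases i)
      case 0 then show ?thesis using h by simp
    next
      case (Suc j) then show ?thesis using h i unfolding is_path_def by auto
    qed
  qed (use h in \<open>auto simp: is_path_def\<close>)
qed

lemma is_path_single: "is_path G [x] \<longleftrightarrow> x \<in> arcs G" unfolding is_path_def by auto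

lemma reachA:
  "is_path G P \<Longrightarrow> \<forall>e\<in>arcs G. src G e \<in> {a,b} \<and> tgt G e \<in> {a,b} \<Longrightarrow> a \<noteq> b \<Longrightarrow> src G (hd P) = a
   \<Longrightarrow> \<exists>e\<in>set P. src G e = b \<or> tgt G e = b \<Longrightarrow> \<exists>e\<in>set P. src G e = a \<and> tgt G e = b"
proof (induction P)
  case Nil then show ?case by simp
next
  case (Cons x xs)
  show ?case
  proof (cases xs)
    case Nil then show ?thesis using Cons.prems by auto
  next
    case (Cons y ys)
    have p: "x \<in> arcs G" "tgt G x = src G y" "is_path G xs" using Cons.prems(1) \<open>xs = y#ys\<close> is_path_Cons2 by auto
    show ?thesis
    proof (cases "src G x = b \<or> tgt G x = b")
      case True then show ?thesis using Cons.prems by auto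
    next
      case False
      then have "tgt G x = a" using p Cons.prems(2) by auto
      then have "\<exists>e\<in>set xs. src G e = a \<and> tgt G e = b"
        using Cons.IH[OF p(3) Cons.prems(2,3)] Cons.prems(5) False p(2) \<open>xs = y#ys\<close> by auto
      then show ?thesis by auto
    qed
  qed
qed

lemma reachB:
  "is_path G P \<Longrightarrow> \<forall>e\<in>arcs G. src G e \<in> {a,b} \<and> tgt G e \<in> {a,b} \<Longrightarrow> a \<noteq> b \<Longrightarrow> tgt G (last P) = a
   \<Longrightarrow> \<exists>e\<in>set P. src G e = b \<or> tgt G e = b \<Longrightarrow> \<exists>e\<in>set P. src G e = b \<and> tgt G e = a"
proof (induction P)
  case Nil then show ?case by simp
next
  case (Cons x xs)
  show ?case
  proof (cases xs)
    case Nil then show ?thesis using Cons.prems by auto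
  next
    case (Cons y ys)
    have p: "x \<in> arcs G" "tgt G x = src G y" "is_path G xs" "y \<in> arcs G" using Cons.prems(1) \<open>xs = y#ys\<close> is_path_Cons2
      by (auto simp: is_path_def)
    show ?thesis
    proof (cases "\<exists>e\<in>set xs. src G e = b \<or> tgt G e = b")
      case True then show ?thesis using Cons.IH[OF p(3) Cons.prems(2,3)] Cons.prems(4) \<open>xs = y#ys\<close> by auto
    next
      case False
      then have "src G y = a" using p Cons.prems(2) \<open>xs = y#ys\<close> by auto
      then have "tgt G x = a" using p by simp
      then have "src G x = b" using False Cons.prems(3,5) by auto
      then show ?thesis using \<open>tgt G x = a\<close> by auto
    qed
  qed
qed

lemma two_eq: "{1..2::nat} = {1,2}" by auto

lemma direct_entry:
  assumes H: "directly_hosts 2 G a" and R: "regular_mgraph 2 r G" and uv: "u \<in> {1,2}" "v \<in> {1,2}"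
  shows "a u v \<le> real (card (Aset G u v)) / 3"
proof -
  have "(\<Sum>u'\<in>{1..2}. \<Sum>v'\<in>{1..2}. a u' v' * (if u' = u \<and> v' = v then 1 else 0))
     \<le> (\<Sum>e\<in>arcs G. (if e \<in> Aset G u v then 1 else 0)) / (2 * real 2 - 1)"
  proof (rule host_bound[where dir=True and r=r])
    show "hosts_gen True 2 G a" using H unfolding directly_hosts_def .
    show "regular_mgraph 2 r G" by fact
    show "\<forall>e\<in>arcs G. 0 \<le> (if e \<in> Aset G u v then 1 else (0::real))" by simp
    fix P assume "is_path G P" "True \<longrightarrow> length P = 1"
    then obtain e where "P = [e]" "e \<in> arcs G" by (auto simp: is_path_def length_Suc_conv)
    then show "(if path_start G P = u \<and> path_end G P = v then 1 else (0::real)) \<le> (\<Sum>e\<in>set P. if e \<in> Aset G u v then 1 else 0)"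
      by (simp add: path_start_def path_end_def Aset_def)
  qed
  moreover have "(\<Sum>u'\<in>{1..2}. \<Sum>v'\<in>{1..2}. a u' v' * (if u' = u \<and> v' = v then 1 else 0)) = a u v"
    unfolding two_eq using uv by auto
  moreover have "(\<Sum>e\<in>arcs G. (if e \<in> Aset G u v then 1 else 0::real)) = real (card (Aset G u v))"
  proof -
    have "finite (arcs G)" using reg2[OF R] by simp
    then have "(\<Sum>e\<in>arcs G. (if e \<in> Aset G u v then 1 else 0::real)) = real (card (arcs G \<inter> Aset G u v))"
      by (simp add: sum.inter_restrict[symmetric])
    also have "arcs G \<inter> Aset G u v = Aset G u v" by (auto simp: Aset_def)
    finally show ?thesis .
  qed
  ultimately show ?thesis by simp
qed


lemma path_facts:
  assumes R: "regular_mgraph 2 r G" and P: "is_path G P"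
  shows "path_start G P \<noteq> path_end G P \<Longrightarrow> \<exists>e\<in>set P. src G e \<noteq> tgt G e"
    and "path_start G P = path_end G P \<Longrightarrow> (\<exists>e\<in>set P. src G e = tgt G e) \<or>
           (\<exists>e1\<in>set P. \<exists>e2\<in>set P. e1 \<noteq> e2 \<and> src G e1 \<noteq> tgt G e1 \<and> src G e2 \<noteq> tgt G e2)"
proof -
  have B: "\<forall>e\<in>arcs G. src G e \<in> {1,2} \<and> tgt G e \<in> {1,2}" using reg2[OF R] by simp
  have ne: "P \<noteq> []" "set P \<subseteq> arcs G" using P by (auto simp: is_path_def)
  then have hl: "hd P \<in> set P" "last P \<in> set P" by auto
  have "hd P \<in> arcs G" "last P \<in> arcs G" using hl ne by auto
  then have sa: "path_start G P \<in> {1,2}" "path_end G P \<in> {1,2}" using B unfolding path_start_def path_end_def by blast+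
  {
    assume d: "path_start G P \<noteq> path_end G P"
    define a where "a = path_start G P"
    define b where "b = path_end G P"
    have ab: "{a,b} = {1::nat,2}" using sa d unfolding a_def b_def by auto
    have "\<exists>e\<in>set P. src G e = a \<and> tgt G e = b"
      by (rule reachA[OF P]) (use B ab d hl in \<open>auto simp: a_def b_def path_start_def path_end_def\<close>)
    then show "\<exists>e\<in>set P. src G e \<noteq> tgt G e" using d unfolding a_def b_def by metis
  }
  {
    assume d: "path_start G P = path_end G P"
    define a where "a = path_start G P"
    define b where "b = (3::nat) - a"
    have ab: "{a,b} = {1::nat,2}" "a \<noteq> b" using sa unfolding a_def b_def by auto
    have B': "\<forall>e\<in>arcs G. src G e \<in> {a,b} \<and> tgt G e \<in> {a,b}" using B ab by simp
    show "(\<exists>e\<in>set P. src G e = tgt G e) \<or>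
           (\<exists>e1\<in>set P. \<exists>e2\<in>set P. e1 \<noteq> e2 \<and> src G e1 \<noteq> tgt G e1 \<and> src G e2 \<noteq> tgt G e2)"
    proof (cases "\<exists>e\<in>set P. src G e = b \<or> tgt G e = b")
      case True
      obtain e1 where e1: "e1 \<in> set P" "src G e1 = a" "tgt G e1 = b"
        using reachA[OF P B' ab(2) _ True] unfolding a_def path_start_def by auto
      obtain e2 where e2: "e2 \<in> set P" "src G e2 = b" "tgt G e2 = a"
        using reachB[OF P B' ab(2) _ True] d unfolding a_def path_start_def path_end_def by auto
      show ?thesis using e1 e2 ab by (metis)
    next
      case False
      then have "tgt G (hd P) \<noteq> b" using hl by auto
      moreover have "hd P \<in> arcs G" using hl ne by auto
      ultimately have "tgt G (hd P) = a" using B' by auto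
      then show ?thesis using hl unfolding a_def path_start_def by metis
    qed
  }
qed

lemma sum_ge1: "finite A \<Longrightarrow> e \<in> A \<Longrightarrow> \<forall>x\<in>A. (w::nat\<Rightarrow>real) x \<ge> 0 \<Longrightarrow> w e \<le> sum w A"
  by (rule member_le_sum) auto

lemma sum_ge2: "finite A \<Longrightarrow> e1 \<in> A \<Longrightarrow> e2 \<in> A \<Longrightarrow> e1 \<noteq> e2 \<Longrightarrow> \<forall>x\<in>A. (w::nat\<Rightarrow>real) x \<ge> 0 \<Longrightarrow> w e1 + w e2 \<le> sum w A"
proof -
  assume h: "finite A" "e1 \<in> A" "e2 \<in> A" "e1 \<noteq> e2" "\<forall>x\<in>A. (w::nat\<Rightarrow>real) x \<ge> 0"
  have "sum w {e1,e2} \<le> sum w A" using h by (intro sum_mono2) auto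
  then show ?thesis using h by simp
qed

lemma rowb: "(x::real) \<le> 1/2 \<Longrightarrow> x \<le> real k / 3 \<Longrightarrow> y \<le> 1/2 \<Longrightarrow> y \<le> real l / 3 \<Longrightarrow> k + l = 3 \<Longrightarrow> x + y \<le> 5/6"
proof -
  assume h: "(x::real) \<le> 1/2" "x \<le> real k / 3" "y \<le> 1/2" "y \<le> real l / 3" "k + l = 3"
  then have "k = 0 \<and> l = 3 \<or> k = 1 \<and> l = 2 \<or> k = 2 \<and> l = 1 \<or> k = 3 \<and> l = 0" by presburger
  then show ?thesis using h by auto
qed

lemma part1b:
  assumes R: "regular_mgraph 2 3 G"
  shows "weak_direct_throughput 2 G M1 \<le> 5/6"
  unfolding weak_direct_throughput_def
proof (rule cSup_least)
  let ?M = "\<lambda>(i::nat) (j::nat). 0::real"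
  have "directly_hosts 2 G ?M"
    unfolding directly_hosts_def hosts_gen_def by (rule exI[of _ "[]"]) simp
  then show "{\<eta>. \<exists>M'. (\<forall>i\<in>{1..2}. \<forall>j\<in>{1..2}. 0 \<le> M' i j \<and> M' i j \<le> M1 i j) \<and>
      (\<Sum>i\<in>{1..2}. \<Sum>j\<in>{1..2}. M' i j) = \<eta> * real 2 \<and> directly_hosts 2 G M'} \<noteq> {}"
    by (intro ex_in_conv[THEN iffD1] exI[of _ 0] CollectI exI[of _ ?M]) (simp add: M1_def)
next
  fix \<eta> assume "\<eta> \<in> {\<eta>. \<exists>M'. (\<forall>i\<in>{1..2}. \<forall>j\<in>{1..2}. 0 \<le> M' i j \<and> M' i j \<le> M1 i j) \<and>
      (\<Sum>i\<in>{1..2}. \<Sum>j\<in>{1..2}. M' i j) = \<eta> * real 2 \<and> directly_hosts 2 G M'}"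
  then obtain M' where M: "\<forall>i\<in>{1..2}. \<forall>j\<in>{1..2}. 0 \<le> M' i j \<and> M' i j \<le> M1 i j"
    "(\<Sum>i\<in>{1..2}. \<Sum>j\<in>{1..2}. M' i j) = \<eta> * real 2" "directly_hosts 2 G M'" by blast
  have e: "M' u v \<le> real (card (Aset G u v)) / 3" if "u \<in> {1,2}" "v \<in> {1,2}" for u v
    using direct_entry[OF M(3) R that] .
  have h: "M' u v \<le> 1/2" if "u \<in> {1,2}" "v \<in> {1,2}" for u v
    using M(1) that by (auto simp: M1_def)
  have r1: "M' 1 1 + M' 1 2 \<le> 5/6"
    by (rule rowb[OF h e h e]) (use reg2(3)[OF R] in auto)
  have r2: "M' 2 1 + M' 2 2 \<le> 5/6"
    by (rule rowb[OF h e h e]) (use reg2(4)[OF R] in auto)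
  have "(\<Sum>i\<in>{1..2}. \<Sum>j\<in>{1..2}. M' i j) = M' 1 1 + M' 1 2 + (M' 2 1 + M' 2 2)"
    unfolding two_eq by simp
  then show "\<eta> \<le> 5/6" using M(2) r1 r2 by simp
qed


lemma sum_Aset: "(\<Sum>e\<in>Aset G u v. (g (src G e) (tgt G e) :: real)) = real (card (Aset G u v)) * g u v"
proof -
  have "(\<Sum>e\<in>Aset G u v. g (src G e) (tgt G e)) = (\<Sum>e\<in>Aset G u v. g u v)"
    by (rule sum.cong) (auto simp: Aset_def)
  then show ?thesis by simp
qed

lemma part2b:
  assumes R: "regular_mgraph 2 3 G"
  shows "throughput 2 G M2 \<le> 50/57"
  unfolding throughput_def
proof (rule cSup_least)
  have "hosts 2 G (\<lambda>i j. 0 * M2 i j)"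
    unfolding hosts_def hosts_gen_def by (rule exI[of _ "[]"]) simp
  then show "{\<theta>. hosts 2 G (\<lambda>i j. \<theta> * M2 i j)} \<noteq> {}" by blast
next
  fix \<theta> assume "\<theta> \<in> {\<theta>. hosts 2 G (\<lambda>i j. \<theta> * M2 i j)}"
  then have H: "hosts_gen False 2 G (\<lambda>i j. \<theta> * M2 i j)" by (simp add: hosts_def)
  have c: "card (Aset G 1 1) + card (Aset G 1 2) = 3" "card (Aset G 2 1) + card (Aset G 2 2) = 3"
    "card (Aset G 1 1) + card (Aset G 2 1) = 3" "card (Aset G 1 2) + card (Aset G 2 2) = 3"
    using reg2[OF R] by auto
  show "\<theta> \<le> 50/57"
  proof (cases "card (Aset G 1 1) \<le> 2")
    case True
    let ?g = "\<lambda>x y::nat. if x = y then 2 else (1::real)"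
    have "(\<Sum>u\<in>{1..2}. \<Sum>v\<in>{1..2}. \<theta> * M2 u v * ?g u v) \<le> (\<Sum>e\<in>arcs G. ?g (src G e) (tgt G e)) / (2 * real 2 - 1)"
    proof (rule host_bound[OF H R])
      show "\<forall>e\<in>arcs G. 0 \<le> ?g (src G e) (tgt G e)" by simp
      fix P assume P: "is_path G P"
      have fin: "finite (set P)" by simp
      have nn: "\<forall>x\<in>set P. 0 \<le> ?g (src G x) (tgt G x)" by simp
      show "?g (path_start G P) (path_end G P) \<le> (\<Sum>e\<in>set P. ?g (src G e) (tgt G e))"
      proof (cases "path_start G P = path_end G P")
        case False
        then obtain e where "e \<in> set P" "src G e \<noteq> tgt G e" using path_facts(1)[OF R P] by blast
        then show ?thesis using sum_ge1[OF fin _ nn] False by fastforce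
      next
        case True
        then consider e where "e \<in> set P" "src G e = tgt G e"
          | e1 e2 where "e1 \<in> set P" "e2 \<in> set P" "e1 \<noteq> e2" "src G e1 \<noteq> tgt G e1" "src G e2 \<noteq> tgt G e2"
          using path_facts(2)[OF R P] by blast
        then show ?thesis
        proof cases
          case 1 then show ?thesis using sum_ge1[OF fin 1(1) nn] True by simp
        next
          case 2 then show ?thesis using sum_ge2[OF fin 2(1,2,3) nn] True by simp
        qed
      qed
    qed
    moreover have "(\<Sum>u\<in>{1..2}. \<Sum>v\<in>{1..2}. \<theta> * M2 u v * ?g u v) = 19/5 * \<theta>"
      unfolding two_eq by (simp add: M2_def)
    moreover have "(\<Sum>e\<in>arcs G. ?g (src G e) (tgt G e)) = real (card (Aset G 1 1)) * 2 + card (Aset G 1 2)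
       + card (Aset G 2 1) + card (Aset G 2 2) * 2"
      unfolding reg2(7)[OF R] sum_Aset[where g="?g"] by simp
    moreover have "real (card (Aset G 1 1)) * 2 + card (Aset G 1 2) + card (Aset G 2 1) + card (Aset G 2 2) * 2 \<le> 10"
    proof -
      have "card (Aset G 1 1) * 2 + card (Aset G 1 2) + card (Aset G 2 1) + card (Aset G 2 2) * 2 \<le> 10"
        using c True by linarith
      then show ?thesis by (metis (mono_tags, opaque_lifting) of_nat_add of_nat_le_iff of_nat_mult of_nat_numeral)
    qed
    ultimately show ?thesis by simp
  next
    case False
    let ?g = "\<lambda>x y::nat. if x = y then 0 else (1::real)"
    have "(\<Sum>u\<in>{1..2}. \<Sum>v\<in>{1..2}. \<theta> * M2 u v * ?g u v) \<le> (\<Sum>e\<in>arcs G. ?g (src G e) (tgt G e)) / (2 * real 2 - 1)"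
    proof (rule host_bound[OF H R])
      show "\<forall>e\<in>arcs G. 0 \<le> ?g (src G e) (tgt G e)" by simp
      fix P assume P: "is_path G P"
      have fin: "finite (set P)" by simp
      have nn: "\<forall>x\<in>set P. 0 \<le> ?g (src G x) (tgt G x)" by simp
      show "?g (path_start G P) (path_end G P) \<le> (\<Sum>e\<in>set P. ?g (src G e) (tgt G e))"
      proof (cases "path_start G P = path_end G P")
        case False
        then obtain e where "e \<in> set P" "src G e \<noteq> tgt G e" using path_facts(1)[OF R P] by blast
        then show ?thesis using sum_ge1[OF fin _ nn] False by fastforce
      next
        case True
        then show ?thesis using nn by (simp add: sum_nonneg)
      qed
    qed
    moreover have "(\<Sum>u\<in>{1..2}. \<Sum>v\<in>{1..2}. \<theta> * M2 u v * ?g u v) = 1/5 * \<theta>"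
      unfolding two_eq by (simp add: M2_def)
    moreover have "(\<Sum>e\<in>arcs G. ?g (src G e) (tgt G e)) = real (card (Aset G 1 1)) * 0 + card (Aset G 1 2)
       + card (Aset G 2 1) + card (Aset G 2 2) * 0"
      unfolding reg2(7)[OF R] sum_Aset[where g="?g"] by simp
    moreover have "card (Aset G 1 2) = 0" "card (Aset G 2 1) = 0" using c False by linarith+
    ultimately show ?thesis by simp
  qed
qed


definition G1 :: mgraph where
  "G1 = \<lparr>arcs = {0..5}, src = (\<lambda>e. if e \<le> 2 then 1 else 2), tgt = (\<lambda>e. if e = 0 \<or> e = 3 \<or> e = 4 then 1 else 2)\<rparr>"

definition G3 :: mgraph where
  "G3 = \<lparr>arcs = {0..5}, src = (\<lambda>e. if e \<le> 2 then 1 else 2), tgt = (\<lambda>e. if e \<le> 2 then 1 else 2)\<rparr>"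

lemma six: "{0..5::nat} = {0,1,2,3,4,5}" by auto

lemma G1_reg: "regular_mgraph 2 3 G1"
proof -
  have a: "{e\<in>{0,1,2,3,4,5::nat}. (if e \<le> 2 then 1 else 2) = (1::nat)} = {0,1,2}" by auto
  have b: "{e\<in>{0,1,2,3,4,5::nat}. (if e \<le> 2 then 1 else 2) = (2::nat)} = {3,4,5}" by auto
  have c: "{e\<in>{0,1,2,3,4,5::nat}. (if e = 0 \<or> e = 3 \<or> e = 4 then 1 else 2) = (1::nat)} = {0,3,4}" by auto
  have d: "{e\<in>{0,1,2,3,4,5::nat}. (if e = 0 \<or> e = 3 \<or> e = 4 then 1 else 2) = (2::nat)} = {1,2,5}" by auto
  show ?thesis unfolding regular_mgraph_def G1_def two_eq six
    using a b c d by simp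
qed

lemma G3_reg: "regular_mgraph 2 3 G3"
proof -
  have a: "{e\<in>{0,1,2,3,4,5::nat}. (if e \<le> 2 then 1 else 2) = (1::nat)} = {0,1,2}" by auto
  have b: "{e\<in>{0,1,2,3,4,5::nat}. (if e \<le> 2 then 1 else 2) = (2::nat)} = {3,4,5}" by auto
  show ?thesis unfolding regular_mgraph_def G3_def two_eq six
    using a b by simp
qed

lemma thr_bdd:
  assumes R: "regular_mgraph 2 3 G" and H: "hosts 2 G (\<lambda>i j. \<theta> * M1 i j)"
  shows "\<theta> \<le> 1"
proof -
  have "(\<Sum>u\<in>{1..2}. \<Sum>v\<in>{1..2}. \<theta> * M1 u v * (\<lambda>x y. 1::real) u v) \<le> (\<Sum>e\<in>arcs G. (\<lambda>e. 1::real) e) / (2 * real 2 - 1)"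
  proof (rule host_bound[where dir=False and r=3])
    show "hosts_gen False 2 G (\<lambda>i j. \<theta> * M1 i j)" using H by (simp add: hosts_def)
    show "regular_mgraph 2 3 G" by fact
    show "\<forall>e\<in>arcs G. 0 \<le> (1::real)" by simp
    fix P assume "is_path G P"
    then have "P \<noteq> []" by (simp add: is_path_def)
    then have "card (set P) \<ge> 1" by (simp add: Suc_le_eq card_gt_0_iff)
    then show "(1::real) \<le> (\<Sum>e\<in>set P. 1)" by simp
  qed
  moreover have "(\<Sum>e\<in>arcs G. (\<lambda>e. 1::real) e) = 6"
  proof -
    have "(\<Sum>e\<in>arcs G. (\<lambda>e. 1::real) e) = real (card (Aset G 1 1) + card (Aset G 1 2) + (card (Aset G 2 1) + card (Aset G 2 2)))"
      unfolding reg2(7)[OF R] by simp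
    also have "\<dots> = 6" using reg2(3,4)[OF R] by simp
    finally show ?thesis .
  qed
  ultimately show ?thesis unfolding two_eq by (simp add: M1_def)
qed

lemma part1a: "throughput 2 G1 M1 \<ge> 8/9"
  unfolding throughput_def
proof (rule cSup_upper)
  show "bdd_above {\<theta>. hosts 2 G1 (\<lambda>i j. \<theta> * M1 i j)}"
    using thr_bdd[OF G1_reg] by (intro bdd_aboveI[of _ 1]) auto
  let ?F = "[([1::nat],2/9::real),([2],2/9),([3],2/9),([4],2/9),([0],1/3),([1,3],1/9),([5],1/3),([4,2],1/9)]"
  have "hosts 2 G1 (\<lambda>i j. 8/9 * M1 i j)"
    unfolding hosts_def hosts_gen_def
  proof (rule exI[of _ ?F], intro conjI)
    show "\<forall>(P, d)\<in>set ?F. is_path G1 P \<and> 0 \<le> d \<and> (False \<longrightarrow> length P = 1)"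
      by (simp add: is_path_Cons2 is_path_single G1_def)
    show "\<forall>u\<in>{1..2}. \<forall>v\<in>{1..2}. sum_list (map (\<lambda>(P, d). if path_start G1 P = u \<and> path_end G1 P = v then d else 0) ?F) = 8/9 * M1 u v"
      unfolding two_eq by (simp add: path_start_def path_end_def G1_def M1_def)
    show "\<forall>e\<in>arcs G1. sum_list (map (\<lambda>(P, d). if e \<in> set P then d else 0) ?F) \<le> 1 / (2 * real 2 - 1)"
      unfolding G1_def six by simp
  qed
  then show "8/9 \<in> {\<theta>. hosts 2 G1 (\<lambda>i j. \<theta> * M1 i j)}" by simp
qed

lemma part2a: "weak_direct_throughput 2 G3 M2 \<ge> 9/10"
  unfolding weak_direct_throughput_def
proof (rule cSup_upper)
  show "bdd_above {\<eta>. \<exists>M'. (\<forall>i\<in>{1..2}. \<forall>j\<in>{1..2}. 0 \<le> M' i j \<and> M' i j \<le> M2 i j) \<and>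
      (\<Sum>i\<in>{1..2}. \<Sum>j\<in>{1..2}. M' i j) = \<eta> * real 2 \<and> directly_hosts 2 G3 M'}"
  proof (rule bdd_aboveI[of _ 1], clarify)
    fix \<eta> M' assume h: "\<forall>i\<in>{1..2}. \<forall>j\<in>{1..2}. 0 \<le> M' i j \<and> M' i j \<le> M2 i j"
      "(\<Sum>i\<in>{1..2}. \<Sum>j\<in>{1..2}. M' i j) = \<eta> * real 2"
    have "(\<Sum>i\<in>{1..2}. \<Sum>j\<in>{1..2}. M' i j) \<le> (\<Sum>i\<in>{1..2::nat}. \<Sum>j\<in>{1..2::nat}. M2 i j)"
      using h(1) by (intro sum_mono) auto
    also have "\<dots> = 2" unfolding two_eq by (simp add: M2_def)
    finally show "\<eta> \<le> 1" using h(2) by simp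
  qed
  let ?M = "\<lambda>i j::nat. if i = j then 9/10 else (0::real)"
  let ?F = "[([0::nat],3/10::real),([1],3/10),([2],3/10),([3],3/10),([4],3/10),([5],3/10)]"
  have "directly_hosts 2 G3 ?M"
    unfolding directly_hosts_def hosts_gen_def
  proof (rule exI[of _ ?F], intro conjI)
    show "\<forall>(P, d)\<in>set ?F. is_path G3 P \<and> 0 \<le> d \<and> (True \<longrightarrow> length P = 1)"
      by (simp add: is_path_single G3_def)
    show "\<forall>u\<in>{1..2}. \<forall>v\<in>{1..2}. sum_list (map (\<lambda>(P, d). if path_start G3 P = u \<and> path_end G3 P = v then d else 0) ?F) = ?M u v"
      unfolding two_eq by (simp add: path_start_def path_end_def G3_def)
    show "\<forall>e\<in>arcs G3. sum_list (map (\<lambda>(P, d). if e \<in> set P then d else 0) ?F) \<le> 1 / (2 * real 2 - 1)"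
      unfolding G3_def six by simp
  qed
  moreover have "\<forall>i\<in>{1..2}. \<forall>j\<in>{1..2}. 0 \<le> ?M i j \<and> ?M i j \<le> M2 i j" by (simp add: M2_def)
  moreover have "(\<Sum>i\<in>{1..2}. \<Sum>j\<in>{1..2}. ?M i j) = 9/10 * real 2" unfolding two_eq by simp
  ultimately have "(\<forall>i\<in>{1..2}. \<forall>j\<in>{1..2}. 0 \<le> ?M i j \<and> ?M i j \<le> M2 i j) \<and>
      (\<Sum>i\<in>{1..2}. \<Sum>j\<in>{1..2}. ?M i j) = 9/10 * real 2 \<and> directly_hosts 2 G3 ?M" by blast
  then show "(9/10::real) \<in> {\<eta>. \<exists>M'. (\<forall>i\<in>{1..2}. \<forall>j\<in>{1..2}. 0 \<le> M' i j \<and> M' i j \<le> M2 i j) \<and>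
      (\<Sum>i\<in>{1..2}. \<Sum>j\<in>{1..2}. M' i j) = \<eta> * real 2 \<and> directly_hosts 2 G3 M'}"
    unfolding mem_Collect_eq by (rule exI[of _ ?M])
qed

theorem mainTheorem4:
  shows "((\<exists>G. regular_mgraph 2 3 G \<and> throughput 2 G M1 \<ge> 8/9) \<and>
          (\<forall>G. regular_mgraph 2 3 G \<longrightarrow> \<not> (weak_direct_throughput 2 G M1 > 5/6))) \<and>
         ((\<exists>G. regular_mgraph 2 3 G \<and> weak_direct_throughput 2 G M2 \<ge> 9/10) \<and>
          (\<forall>G. regular_mgraph 2 3 G \<longrightarrow> \<not> (throughput 2 G M2 \<ge> 9/10)))"
proof (intro conjI allI impI)
  show "\<exists>G. regular_mgraph 2 3 G \<and> throughput 2 G M1 \<ge> 8/9" using G1_reg part1a by blast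
  show "\<exists>G. regular_mgraph 2 3 G \<and> weak_direct_throughput 2 G M2 \<ge> 9/10" using G3_reg part2a by blast
  fix G assume R: "regular_mgraph 2 3 G"
  show "\<not> (weak_direct_throughput 2 G M1 > 5/6)" using part1b[OF R] by simp
  show "\<not> (throughput 2 G M2 \<ge> 9/10)" using part2b[OF R] by simp
qed

end
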